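(* For any integer $p$ there is an infinitely narrow soliton type solution of the Hopf equation $u_t+uu_x=0$ up to $e^{-p}$ in the sense of $\mathbf{R}\langle\varepsilon\rangle$-distributions, i.e. a function $$v(t,x,\varepsilon)=l_0+\Delta l\, \varphi\!\left(\frac{x-ct}{\varepsilon}\right),$$ with $l_0,\Delta l,c$ real numbers, $\Delta l\neq 0$, $\varphi\in\mathcal{S}(\mathbf{R})$, $\int_{-\infty}^{+\infty}\varphi(y)\,dy=1$, such that for every $t\in[0,T]$ and every $\psi\in\mathcal{S}(\mathbf{R})$, $$\int_{-\infty}^{+\infty}\{v_t(t,x,\varepsilon)+v(t,x,\varepsilon)v_x(t,x,\varepsilon)\}\psi(x)\,dx=\sum_{k=p}^{+\infty}\xi_k\varepsilon^k\in\mathbf{R}\langle\varepsilon\rangle .$$ Moreover, $$\frac{c-l_0}{\Delta l}=\frac12\int_{-\infty}^{+\infty}\varphi^2(x)\,dx.$$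
   Context: $\mathbf{R}\langle\varepsilon\rangle$ is the field of formal Laurent series $\sum_{n\ge 0}\xi_{n+k}\varepsilon^{n+k}$ ($k\in\mathbf{Z}$, $\xi_i\in\mathbf{R}$) with the non-Archimedean norm $|x|_\nu=e^{-\nu(x)}$, where $\nu(x)$ is the lowest exponent with nonzero coefficient ($\nu(0)=\infty$). An integral depending on $\varepsilon\in(0,1]$ is regarded as an element of $\mathbf{R}\langle\varepsilon\rangle$ via its expansion in powers of $\varepsilon$; "solution up to $e^{-p}$" means this element has the form $\sum_{k\ge p}\xi_k\varepsilon^k$ (norm at most $e^{-p}$). $T>0$ is a fixed time horizon and $\mathcal{S}(\mathbf{R})$ is the Schwartz space. *)

theory Defs
  imports "HOL-Analysis.Analysis" "HOL-Library.Landau_Symbols"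
begin

definition schwartz :: "(real \<Rightarrow> real) \<Rightarrow> bool" where
  "schwartz f \<longleftrightarrow>
     (\<forall>n x. ((deriv ^^ n) f) differentiable (at x)) \<and>
     (\<forall>m n. bounded (range (\<lambda>x. x ^ m * (deriv ^^ n) f x)))"

text \<open>A function of eps in (0,1] is "a solution up to e^(-p)" in R<eps>:
its asymptotic expansion in powers of eps (as eps -> 0+) has the form
sum_{k >= p} xi_k eps^k.\<close>
definition R_eps_up_to :: "int \<Rightarrow> (real \<Rightarrow> real) \<Rightarrow> bool" where
  "R_eps_up_to p F \<longleftrightarrow>
     (\<exists>\<xi> :: int \<Rightarrow> real. \<forall>N :: int.
        (\<lambda>\<epsilon>. F \<epsilon> - (\<Sum>k\<in>{p..N}. \<xi> k * \<epsilon> powi k))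
          \<in> O[at_right 0](\<lambda>\<epsilon>. \<epsilon> powi (N + 1)))"

definition soliton_v ::
  "real \<Rightarrow> real \<Rightarrow> real \<Rightarrow> (real \<Rightarrow> real) \<Rightarrow> real \<Rightarrow> real \<Rightarrow> real \<Rightarrow> real" where
  "soliton_v l0 dl c \<phi> t x \<epsilon> = l0 + dl * \<phi> ((x - c * t) / \<epsilon>)"

end

theory Submission
  imports Defs "HOL-Real_Asymp.Real_Asymp"
begin

fun Sw :: "nat \<Rightarrow> (real \<Rightarrow> real) \<Rightarrow> bool" where
  "Sw 0 u = (\<forall>m. \<exists>B. \<forall>x. \<bar>x ^ m * u x\<bar> \<le> B)"
| "Sw (Suc n) u = ((\<forall>x. u differentiable (at x)) \<and> Sw 0 u \<and> Sw n (deriv u))"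

fun Bd :: "nat \<Rightarrow> (real \<Rightarrow> real) \<Rightarrow> bool" where
  "Bd 0 u = (\<exists>B. \<forall>x. \<bar>u x\<bar> \<le> B)"
| "Bd (Suc n) u = ((\<forall>x. u differentiable (at x)) \<and> Bd 0 u \<and> Bd n (deriv u))"

lemma Sw_0: "Sw n u \<Longrightarrow> Sw 0 u" by (cases n) auto
lemma Bd_0: "Bd n u \<Longrightarrow> Bd 0 u" by (cases n) auto

lemma Sw_Suc_mono: "Sw (Suc n) u \<Longrightarrow> Sw n u"
  by (induction n arbitrary: u) auto
lemma Bd_Suc_mono: "Bd (Suc n) u \<Longrightarrow> Bd n u"
  by (induction n arbitrary: u) auto

lemma Sw_SucD: assumes "Sw (Suc n) u"
  shows "\<forall>x. u differentiable (at x)" "Sw 0 u" "Sw n (deriv u)" "Sw n u"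
  using assms Sw_Suc_mono[OF assms] by auto
lemma Bd_SucD: assumes "Bd (Suc n) u"
  shows "\<forall>x. u differentiable (at x)" "Bd 0 u" "Bd n (deriv u)" "Bd n u"
  using assms Bd_Suc_mono[OF assms] by auto
lemma Sw_SucI: "\<forall>x. u differentiable (at x) \<Longrightarrow> Sw 0 u \<Longrightarrow> Sw n (deriv u) \<Longrightarrow> Sw (Suc n) u"
  by simp
lemma Bd_SucI: "\<forall>x. u differentiable (at x) \<Longrightarrow> Bd 0 u \<Longrightarrow> Bd n (deriv u) \<Longrightarrow> Bd (Suc n) u"
  by simp
lemma Sw_0I: "(\<And>m. \<exists>B. \<forall>x. \<bar>x ^ m * u x\<bar> \<le> B) \<Longrightarrow> Sw 0 u" by simp
lemma Sw_0D: "Sw 0 u \<Longrightarrow> \<exists>B. \<forall>x. \<bar>x ^ m * u x\<bar> \<le> B" by simp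
lemma Bd_0I: "\<forall>x. \<bar>u x\<bar> \<le> B \<Longrightarrow> Bd 0 u" by auto
lemma Bd_0D: "Bd 0 u \<Longrightarrow> \<exists>B. \<forall>x. \<bar>u x\<bar> \<le> B" by simp

lemma Sw_imp_Bd: "Sw n u \<Longrightarrow> Bd n u"
proof (induction n arbitrary: u)
  case 0
  then obtain B where "\<forall>x. \<bar>x ^ 0 * u x\<bar> \<le> B" using Sw_0D by blast
  then show ?case by (intro Bd_0I[of _ B]) simp
next
  case (Suc n)
  show ?case
  proof (rule Bd_SucI)
    show "\<forall>x. u differentiable (at x)" using Sw_SucD(1)[OF Suc.prems] .
    show "Bd 0 u" using Suc.IH[OF Sw_SucD(4)[OF Suc.prems]] by (rule Bd_0)
    show "Bd n (deriv u)" using Suc.IH[OF Sw_SucD(3)[OF Suc.prems]] .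
  qed
qed

lemma D_of: fixes u :: "real \<Rightarrow> real" assumes "\<forall>x. u differentiable (at x)" shows "DERIV u x :> deriv u x"
proof -
  have "u differentiable (at x)" using assms by blast
  then obtain D where D: "DERIV u x :> D" using real_differentiable_def by blast
  then have "deriv u x = D" by (rule DERIV_imp_deriv)
  then show ?thesis using D by simp
qed

lemma Sw_add: "Sw n u \<Longrightarrow> Sw n v \<Longrightarrow> Sw n (\<lambda>x. u x + v x)"
proof (induction n arbitrary: u v)
  case 0
  show ?case
  proof (rule Sw_0I)
    fix m
    obtain B1 where B1: "\<forall>x. \<bar>x ^ m * u x\<bar> \<le> B1" using Sw_0D[OF 0(1)] by blast
    obtain B2 where B2: "\<forall>x. \<bar>x ^ m * v x\<bar> \<le> B2" using Sw_0D[OF 0(2)] by blast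
    from B1 B2 have "\<forall>x. \<bar>x ^ m * (u x + v x)\<bar> \<le> B1 + B2"
      by (metis abs_triangle_ineq add_mono distrib_left order_trans)
    then show "\<exists>B. \<forall>x. \<bar>x ^ m * (u x + v x)\<bar> \<le> B" by blast
  qed
next
  case (Suc n)
  have du: "\<forall>x. u differentiable (at x)" and dv: "\<forall>x. v differentiable (at x)"
    using Sw_SucD(1) Suc.prems by blast+
  have e: "deriv (\<lambda>x. u x + v x) = (\<lambda>x. deriv u x + deriv v x)"
    by (rule ext, rule DERIV_imp_deriv, intro DERIV_add D_of du dv)
  show ?case
  proof (rule Sw_SucI)
    show "\<forall>x. (\<lambda>x. u x + v x) differentiable (at x)" using du dv by simp
    show "Sw 0 (\<lambda>x. u x + v x)"
      using Suc.IH[OF Sw_SucD(4)[OF Suc.prems(1)] Sw_SucD(4)[OF Suc.prems(2)]] by (rule Sw_0)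
    show "Sw n (deriv (\<lambda>x. u x + v x))" unfolding e
      using Suc.IH[OF Sw_SucD(3)[OF Suc.prems(1)] Sw_SucD(3)[OF Suc.prems(2)]] .
  qed
qed

lemma Bd_add: "Bd n u \<Longrightarrow> Bd n v \<Longrightarrow> Bd n (\<lambda>x. u x + v x)"
proof (induction n arbitrary: u v)
  case 0
  obtain B1 where B1: "\<forall>x. \<bar>u x\<bar> \<le> B1" using Bd_0D[OF 0(1)] by blast
  obtain B2 where B2: "\<forall>x. \<bar>v x\<bar> \<le> B2" using Bd_0D[OF 0(2)] by blast
  from B1 B2 have "\<forall>x. \<bar>u x + v x\<bar> \<le> B1 + B2"
    by (meson abs_triangle_ineq add_mono order_trans)
  then show ?case by (rule Bd_0I)
next
  case (Suc n)
  have du: "\<forall>x. u differentiable (at x)" and dv: "\<forall>x. v differentiable (at x)"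
    using Bd_SucD(1) Suc.prems by blast+
  have e: "deriv (\<lambda>x. u x + v x) = (\<lambda>x. deriv u x + deriv v x)"
    by (rule ext, rule DERIV_imp_deriv, intro DERIV_add D_of du dv)
  show ?case
  proof (rule Bd_SucI)
    show "\<forall>x. (\<lambda>x. u x + v x) differentiable (at x)" using du dv by simp
    show "Bd 0 (\<lambda>x. u x + v x)"
      using Suc.IH[OF Bd_SucD(4)[OF Suc.prems(1)] Bd_SucD(4)[OF Suc.prems(2)]] by (rule Bd_0)
    show "Bd n (deriv (\<lambda>x. u x + v x))" unfolding e
      using Suc.IH[OF Bd_SucD(3)[OF Suc.prems(1)] Bd_SucD(3)[OF Suc.prems(2)]] .
  qed
qed

lemma Sw_cmult: "Sw n u \<Longrightarrow> Sw n (\<lambda>x. c * u x)"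
proof (induction n arbitrary: u)
  case 0
  show ?case
  proof (rule Sw_0I)
    fix m
    obtain B where B: "\<forall>x. \<bar>x ^ m * u x\<bar> \<le> B" using Sw_0D[OF 0(1)] by blast
    have "\<forall>x. \<bar>x ^ m * (c * u x)\<bar> \<le> \<bar>c\<bar> * B"
    proof
      fix x
      have "\<bar>x ^ m * (c * u x)\<bar> = \<bar>c\<bar> * \<bar>x ^ m * u x\<bar>" by (simp add: abs_mult)
      also have "\<dots> \<le> \<bar>c\<bar> * B" using B by (simp add: mult_left_mono)
      finally show "\<bar>x ^ m * (c * u x)\<bar> \<le> \<bar>c\<bar> * B" .
    qed
    then show "\<exists>B. \<forall>x. \<bar>x ^ m * (c * u x)\<bar> \<le> B" by blast
  qed
next
  case (Suc n)
  have du: "\<forall>x. u differentiable (at x)" using Sw_SucD(1) Suc.prems by blast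
  have e: "deriv (\<lambda>x. c * u x) = (\<lambda>x. c * deriv u x)"
    by (rule ext, rule DERIV_imp_deriv, intro DERIV_cmult D_of du)
  show ?case
  proof (rule Sw_SucI)
    show "\<forall>x. (\<lambda>x. c * u x) differentiable (at x)" using du by simp
    show "Sw 0 (\<lambda>x. c * u x)" using Suc.IH[OF Sw_SucD(4)[OF Suc.prems]] by (rule Sw_0)
    show "Sw n (deriv (\<lambda>x. c * u x))" unfolding e using Suc.IH[OF Sw_SucD(3)[OF Suc.prems]] .
  qed
qed

lemma Sw_Bd_mult: "Sw n u \<Longrightarrow> Bd n v \<Longrightarrow> Sw n (\<lambda>x. u x * v x)"
proof (induction n arbitrary: u v)
  case 0
  show ?case
  proof (rule Sw_0I)
    fix m
    obtain B1 where B1: "\<forall>x. \<bar>x ^ m * u x\<bar> \<le> B1" using Sw_0D[OF 0(1)] by blast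
    obtain B2 where B2: "\<forall>x. \<bar>v x\<bar> \<le> B2" using Bd_0D[OF 0(2)] by blast
    have "\<forall>x. \<bar>x ^ m * (u x * v x)\<bar> \<le> B1 * B2"
    proof
      fix x
      have "\<bar>x ^ m * (u x * v x)\<bar> = \<bar>x ^ m * u x\<bar> * \<bar>v x\<bar>" by (simp add: abs_mult)
      also have "\<dots> \<le> B1 * B2" using B1 B2 by (meson abs_ge_zero mult_mono order_trans)
      finally show "\<bar>x ^ m * (u x * v x)\<bar> \<le> B1 * B2" .
    qed
    then show "\<exists>B. \<forall>x. \<bar>x ^ m * (u x * v x)\<bar> \<le> B" by blast
  qed
next
  case (Suc n)
  have du: "\<forall>x. u differentiable (at x)" using Sw_SucD(1) Suc.prems(1) by blast
  have dv: "\<forall>x. v differentiable (at x)" using Bd_SucD(1) Suc.prems(2) by blast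
  have e: "deriv (\<lambda>x. u x * v x) = (\<lambda>x. deriv u x * v x + u x * deriv v x)"
  proof (rule ext, rule DERIV_imp_deriv)
    fix x show "DERIV (\<lambda>x. u x * v x) x :> deriv u x * v x + u x * deriv v x"
      using DERIV_mult[OF D_of[OF du] D_of[OF dv], of x] by (simp add: mult.commute)
  qed
  have 1: "Sw n (\<lambda>x. deriv u x * v x)"
    using Suc.IH[OF Sw_SucD(3)[OF Suc.prems(1)] Bd_SucD(4)[OF Suc.prems(2)]] .
  have 2: "Sw n (\<lambda>x. u x * deriv v x)"
    using Suc.IH[OF Sw_SucD(4)[OF Suc.prems(1)] Bd_SucD(3)[OF Suc.prems(2)]] .
  show ?case
  proof (rule Sw_SucI)
    show "\<forall>x. (\<lambda>x. u x * v x) differentiable (at x)" using du dv by simp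
    show "Sw 0 (\<lambda>x. u x * v x)"
      using Suc.IH[OF Sw_SucD(4)[OF Suc.prems(1)] Bd_SucD(4)[OF Suc.prems(2)]] by (rule Sw_0)
    show "Sw n (deriv (\<lambda>x. u x * v x))" unfolding e using Sw_add[OF 1 2] .
  qed
qed

lemma Bd_mult: "Bd n u \<Longrightarrow> Bd n v \<Longrightarrow> Bd n (\<lambda>x. u x * v x)"
proof (induction n arbitrary: u v)
  case 0
  obtain B1 where B1: "\<forall>x. \<bar>u x\<bar> \<le> B1" using Bd_0D[OF 0(1)] by blast
  obtain B2 where B2: "\<forall>x. \<bar>v x\<bar> \<le> B2" using Bd_0D[OF 0(2)] by blast
  have "\<forall>x. \<bar>u x * v x\<bar> \<le> B1 * B2"
    using B1 B2 by (metis abs_ge_zero abs_mult mult_mono order_trans)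
  then show ?case by (rule Bd_0I)
next
  case (Suc n)
  have du: "\<forall>x. u differentiable (at x)" using Bd_SucD(1) Suc.prems(1) by blast
  have dv: "\<forall>x. v differentiable (at x)" using Bd_SucD(1) Suc.prems(2) by blast
  have e: "deriv (\<lambda>x. u x * v x) = (\<lambda>x. deriv u x * v x + u x * deriv v x)"
  proof (rule ext, rule DERIV_imp_deriv)
    fix x show "DERIV (\<lambda>x. u x * v x) x :> deriv u x * v x + u x * deriv v x"
      using DERIV_mult[OF D_of[OF du] D_of[OF dv], of x] by (simp add: mult.commute)
  qed
  have 1: "Bd n (\<lambda>x. deriv u x * v x)"
    using Suc.IH[OF Bd_SucD(3)[OF Suc.prems(1)] Bd_SucD(4)[OF Suc.prems(2)]] .
  have 2: "Bd n (\<lambda>x. u x * deriv v x)"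
    using Suc.IH[OF Bd_SucD(4)[OF Suc.prems(1)] Bd_SucD(3)[OF Suc.prems(2)]] .
  show ?case
  proof (rule Bd_SucI)
    show "\<forall>x. (\<lambda>x. u x * v x) differentiable (at x)" using du dv by simp
    show "Bd 0 (\<lambda>x. u x * v x)"
      using Suc.IH[OF Bd_SucD(4)[OF Suc.prems(1)] Bd_SucD(4)[OF Suc.prems(2)]] by (rule Bd_0)
    show "Bd n (deriv (\<lambda>x. u x * v x))" unfolding e using Bd_add[OF 1 2] .
  qed
qed

lemma Sw_xmult: "Sw n u \<Longrightarrow> Sw n (\<lambda>x. x * u x)"
proof (induction n arbitrary: u)
  case 0
  show ?case
  proof (rule Sw_0I)
    fix m
    obtain B where B: "\<forall>x. \<bar>x ^ Suc m * u x\<bar> \<le> B" using Sw_0D[OF 0(1)] by blast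
    then have "\<forall>x. \<bar>x ^ m * (x * u x)\<bar> \<le> B" by (simp add: mult.assoc mult.commute mult.left_commute)
    then show "\<exists>B. \<forall>x. \<bar>x ^ m * (x * u x)\<bar> \<le> B" by blast
  qed
next
  case (Suc n)
  have du: "\<forall>x. u differentiable (at x)" using Sw_SucD(1) Suc.prems by blast
  have e: "deriv (\<lambda>x. x * u x) = (\<lambda>x. u x + x * deriv u x)"
  proof (rule ext, rule DERIV_imp_deriv)
    fix x show "DERIV (\<lambda>x. x * u x) x :> u x + x * deriv u x"
      using DERIV_mult[OF DERIV_ident D_of[OF du], of x] by (simp add: mult.commute)
  qed
  show ?case
  proof (rule Sw_SucI)
    show "\<forall>x. (\<lambda>x. x * u x) differentiable (at x)" using du by simp
    show "Sw 0 (\<lambda>x. x * u x)" using Suc.IH[OF Sw_SucD(4)[OF Suc.prems]] by (rule Sw_0)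
    show "Sw n (deriv (\<lambda>x. x * u x))" unfolding e
      using Sw_add[OF Sw_SucD(4)[OF Suc.prems] Suc.IH[OF Sw_SucD(3)[OF Suc.prems]]] .
  qed
qed

lemma Sw_deriv_funpow: "Sw (k + n) u \<Longrightarrow> Sw n ((deriv ^^ k) u)"
proof (induction k arbitrary: u)
  case 0 then show ?case by simp
next
  case (Suc k)
  then have "Sw (k + n) (deriv u)" by simp
  then show ?case using Suc.IH by (simp add: funpow_Suc_right del: funpow.simps)
qed

lemma schwartz_of_Sw: "(\<forall>n. Sw n u) \<Longrightarrow> schwartz u"
  unfolding schwartz_def
proof safe
  fix n x assume a: "\<forall>n. Sw n u"
  have "Sw (Suc 0) ((deriv ^^ n) u)" using a Sw_deriv_funpow[of n "Suc 0" u] by simp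
  then show "(deriv ^^ n) u differentiable at x" by simp
next
  fix m n assume a: "\<forall>n. Sw n u"
  have "Sw 0 ((deriv ^^ n) u)" using a Sw_deriv_funpow[of n 0 u] by simp
  then obtain B where "\<forall>x. \<bar>x ^ m * (deriv ^^ n) u x\<bar> \<le> B" using Sw_0D by blast
  then show "bounded (range (\<lambda>x. x ^ m * (deriv ^^ n) u x))"
    unfolding bounded_iff by auto
qed


lemma abs_pow_le: "\<bar>x::real\<bar> ^ m \<le> 1 + (x ^ 2) ^ m"
proof (cases "\<bar>x\<bar> \<le> 1")
  case True
  then have "\<bar>x\<bar> ^ m \<le> 1" by (simp add: power_le_one)
  moreover have "0 \<le> (x ^ 2) ^ m" by simp
  ultimately show ?thesis by linarith
next
  case False
  then have "\<bar>x\<bar> ^ m \<le> \<bar>x\<bar> ^ (2 * m)" by (intro power_increasing) auto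
  also have "\<dots> = (x ^ 2) ^ m" by (simp add: power_mult power2_abs)
  finally show ?thesis by simp
qed

lemma pow_le_exp: assumes t: "0 \<le> (t::real)" shows "t ^ m \<le> real m ^ m * exp t"
proof (cases "m = 0")
  case True then show ?thesis using t by simp
next
  case False
  have "(1 + t / real m) ^ m \<le> exp t"
    by (rule exp_ge_one_plus_x_over_n_power_n) (use t False in auto)
  moreover have "(t / real m) ^ m \<le> (1 + t / real m) ^ m"
    by (rule power_mono) (use t in auto)
  ultimately have "(t / real m) ^ m \<le> exp t" by linarith
  then have "t ^ m / real m ^ m \<le> exp t" by (simp add: power_divide)
  then show ?thesis using False by (simp add: field_simps)
qed

lemma gauss_bound: "\<exists>B. \<forall>x::real. \<bar>x ^ m * exp (- (x ^ 2))\<bar> \<le> B"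
proof (intro exI allI)
  fix x :: real
  have "\<bar>x ^ m * exp (- (x ^ 2))\<bar> = \<bar>x\<bar> ^ m * exp (- (x ^ 2))" by (simp add: abs_mult power_abs)
  also have "\<dots> \<le> (1 + (x ^ 2) ^ m) * exp (- (x ^ 2))"
    by (rule mult_right_mono) (auto simp: abs_pow_le)
  also have "\<dots> = exp (- (x ^ 2)) + (x ^ 2) ^ m * exp (- (x ^ 2))" by (simp add: algebra_simps)
  also have "\<dots> \<le> 1 + real m ^ m"
  proof -
    have "exp (- (x ^ 2)) \<le> 1" by simp
    moreover have "(x ^ 2) ^ m * exp (- (x ^ 2)) \<le> real m ^ m * exp (x ^ 2) * exp (- (x ^ 2))"
      by (rule mult_right_mono) (auto simp: pow_le_exp)
    moreover have "real m ^ m * exp (x ^ 2) * exp (- (x ^ 2)) = real m ^ m"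
      by (simp add: exp_minus field_simps)
    ultimately show ?thesis by linarith
  qed
  finally show "\<bar>x ^ m * exp (- (x ^ 2))\<bar> \<le> 1 + real m ^ m" .
qed

lemma Sw_gauss: "Sw n (\<lambda>x. exp (- (x ^ 2)))"
proof (induction n)
  case 0 then show ?case using gauss_bound by simp
next
  case (Suc n)
  have gD: "DERIV (\<lambda>x. exp (- (x ^ 2))) x :> (-2) * (x * exp (- (x ^ 2)))" for x :: real
  proof -
    have "DERIV (\<lambda>x. - (x ^ 2)) x :> - (real 2 * x ^ (2 - 1))"
      using DERIV_minus[OF DERIV_pow[of 2 x]] by simp
    from DERIV_fun_exp[OF this]
    show "DERIV (\<lambda>x. exp (- (x ^ 2))) x :> (-2) * (x * exp (- (x ^ 2)))"
      by (simp add: algebra_simps)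
  qed
  have e: "deriv (\<lambda>x::real. exp (- (x ^ 2))) = (\<lambda>x. (-2) * (x * exp (- (x ^ 2))))"
    by (rule ext, rule DERIV_imp_deriv, rule gD)
  have "Sw n (deriv (\<lambda>x. exp (- (x ^ 2))))" unfolding e
    by (intro Sw_cmult Sw_xmult Suc.IH)
  moreover have "\<forall>x::real. (\<lambda>x. exp (- (x ^ 2))) differentiable (at x)"
    using gD real_differentiable_def by blast
  moreover have "Sw 0 (\<lambda>x. exp (- ((x::real) ^ 2)))" using gauss_bound by simp
  ultimately show ?case by (intro Sw_SucI)
qed

lemma powr_bound:
  fixes b e :: real
  assumes "1/2 \<le> b" "b \<le> 3/2"
  shows "b powr e \<le> 2 powr \<bar>e\<bar>"
proof (cases "0 \<le> e")
  case True
  have "b powr e \<le> 2 powr e" by (rule powr_mono2) (use True assms in auto)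
  then show ?thesis using True by simp
next
  case False
  have "b powr e = (1 / b) powr (- e)"
    using assms by (simp add: powr_minus_divide powr_divide)
  also have "\<dots> \<le> 2 powr (- e)" by (rule powr_mono2) (use False assms in \<open>auto simp: field_simps\<close>)
  finally show ?thesis using False by simp
qed

lemma Bd_comp:
  assumes H: "\<forall>n. Sw n H" and Hb: "\<forall>x. \<bar>H x\<bar> \<le> 1/8"
  shows "Bd n (\<lambda>x. C * (1 + 4 * H x) powr e)"
proof (induction n arbitrary: C e)
  case 0
  have "\<forall>x. \<bar>C * (1 + 4 * H x) powr e\<bar> \<le> \<bar>C\<bar> * 2 powr \<bar>e\<bar>"
  proof
    fix x
    have b: "1/2 \<le> 1 + 4 * H x" "1 + 4 * H x \<le> 3/2" using Hb[rule_format, of x] by auto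
    have "\<bar>C * (1 + 4 * H x) powr e\<bar> = \<bar>C\<bar> * (1 + 4 * H x) powr e" by (simp add: abs_mult)
    also have "\<dots> \<le> \<bar>C\<bar> * 2 powr \<bar>e\<bar>" by (rule mult_left_mono) (use powr_bound[OF b] in auto)
    finally show "\<bar>C * (1 + 4 * H x) powr e\<bar> \<le> \<bar>C\<bar> * 2 powr \<bar>e\<bar>" .
  qed
  then show ?case by (simp only: Bd.simps) blast
next
  case (Suc n)
  have dH: "\<forall>x. H differentiable (at x)" using H[rule_format, of 1] by simp
  have pos: "0 < 1 + 4 * H x" for x using Hb[rule_format, of x] by linarith
  have D: "DERIV (\<lambda>x. C * (1 + 4 * H x) powr e) x :> (4 * C * e * (1 + 4 * H x) powr (e - 1)) * deriv H x" for x
  proof -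
    have "DERIV (\<lambda>x. 1 + 4 * H x) x :> 0 + 4 * deriv H x"
      by (intro DERIV_add DERIV_const DERIV_cmult D_of dH)
    from DERIV_cmult[OF DERIV_fun_powr[where r=e, OF this pos], of C]
    show ?thesis by (simp add: algebra_simps)
  qed
  have e: "deriv (\<lambda>x. C * (1 + 4 * H x) powr e) = (\<lambda>x. (4 * C * e * (1 + 4 * H x) powr (e - 1)) * deriv H x)"
    by (rule ext, rule DERIV_imp_deriv, rule D)
  have "Sw n (deriv H)" using H[rule_format, of "Suc n"] by simp
  then have "Bd n (deriv H)" by (rule Sw_imp_Bd)
  then have "Bd n (deriv (\<lambda>x. C * (1 + 4 * H x) powr e))" unfolding e
    by (intro Bd_mult Suc.IH)
  moreover have "Bd 0 (\<lambda>x. C * (1 + 4 * H x) powr e)" using Suc.IH Bd_0 by blast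
  moreover have "\<forall>x. (\<lambda>x. C * (1 + 4 * H x) powr e) differentiable (at x)"
    using D real_differentiable_def by blast
  ultimately show ?case by (intro Bd_SucI)
qed

lemma f_bound: assumes "-1/4 \<le> (z::real)" shows "\<bar>(1 - sqrt (1 + 4 * z)) / 2\<bar> \<le> 2 * \<bar>z\<bar>"
proof -
  define s where "s = sqrt (1 + 4 * z)"
  have s0: "0 \<le> s" using assms by (simp add: s_def)
  have ss: "s * s = 1 + 4 * z" using assms by (simp add: s_def)
  have e: "(1 - s) * (1 + s) = - 4 * z" using ss by (simp add: algebra_simps)
  have "\<bar>1 - s\<bar> * (1 + s) = \<bar>(1 - s) * (1 + s)\<bar>" using s0 by (simp add: abs_mult)
  also have "\<dots> = 4 * \<bar>z\<bar>" unfolding e by (simp add: abs_mult)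
  finally have e2: "\<bar>1 - s\<bar> * (1 + s) = 4 * \<bar>z\<bar>" .
  have "\<bar>1 - s\<bar> * 1 \<le> \<bar>1 - s\<bar> * (1 + s)" by (rule mult_left_mono) (use s0 in auto)
  then have "\<bar>1 - s\<bar> \<le> 4 * \<bar>z\<bar>" using e2 by simp
  then show ?thesis unfolding s_def[symmetric] by simp
qed


lemma integrable_inv_sq: "integrable lborel (\<lambda>x::real. inverse (1 + x\<^sup>2))"
proof -
  have "set_integrable lborel (einterval (-\<infinity>) \<infinity>) (\<lambda>x::real. inverse (1 + x\<^sup>2))"
  proof (rule interval_integral_FTC_nonneg(1)[where F = arctan and A = "- (pi/2)" and B = "pi/2"])
    show "(- \<infinity>::ereal) < \<infinity>" by simp
    show "\<And>x. - \<infinity> < ereal x \<Longrightarrow> ereal x < \<infinity> \<Longrightarrow> DERIV arctan x :> inverse (1 + x\<^sup>2)"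
      by (rule DERIV_arctan)
    show "isCont (\<lambda>x::real. inverse (1 + x\<^sup>2)) x" for x
    proof -
      have "1 + x\<^sup>2 \<noteq> 0" using zero_le_power2[of x] by linarith
      then show ?thesis by (intro continuous_intros)
    qed
    show "AE x in lborel. - \<infinity> < ereal x \<longrightarrow> ereal x < \<infinity> \<longrightarrow> 0 \<le> inverse (1 + x\<^sup>2)"
      by simp
    show "((arctan \<circ> real_of_ereal) \<longlongrightarrow> - (pi / 2)) (at_right (- \<infinity>))"
      unfolding ereal_tendsto_simps by (rule tendsto_arctan_at_bot)
    show "((arctan \<circ> real_of_ereal) \<longlongrightarrow> pi / 2) (at_left \<infinity>)"
      unfolding ereal_tendsto_simps by (rule tendsto_arctan_at_top)
  qed
  then show ?thesis by (simp add: set_integrable_def)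
qed

lemma Sw1_cont: "Sw (Suc 0) u \<Longrightarrow> continuous_on UNIV u"
  by (intro continuous_at_imp_continuous_on ballI differentiable_imp_continuous_within) (use Sw_SucD(1) in blast)

lemma cont_meas: "continuous_on UNIV (u::real \<Rightarrow> real) \<Longrightarrow> u \<in> borel_measurable lborel"
  using borel_measurable_continuous_onI by simp

lemma integrable_cont_bound:
  fixes g h :: "real \<Rightarrow> real"
  assumes "integrable lborel h" "continuous_on UNIV g" "\<And>y. \<bar>g y\<bar> \<le> C * \<bar>h y\<bar>"
  shows "integrable lborel g"
proof -
  have i: "integrable lborel (\<lambda>y. C * h y)" using assms(1) by simp
  have m: "g \<in> borel_measurable lborel" using assms(2) by (rule cont_meas)
  have a: "AE x in lborel. norm (g x) \<le> norm (C * h x)"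
  proof (rule AE_I2)
    fix x
    have "C * \<bar>h x\<bar> \<le> \<bar>C\<bar> * \<bar>h x\<bar>" by (rule mult_right_mono) auto
    then show "norm (g x) \<le> norm (C * h x)" using assms(3)[of x] by (simp add: abs_mult)
  qed
  show ?thesis using Bochner_Integration.integrable_bound[OF i m a] .
qed

lemma Sw0_decay:
  assumes "Sw 0 u"
  shows "\<exists>C. \<forall>y. \<bar>y ^ k * u y\<bar> \<le> C * \<bar>inverse (1 + y\<^sup>2)\<bar>"
proof -
  obtain B0 where B0: "\<forall>y. \<bar>y ^ k * u y\<bar> \<le> B0" using Sw_0D[OF assms] by blast
  obtain B2 where B2: "\<forall>y. \<bar>y ^ (k + 2) * u y\<bar> \<le> B2" using Sw_0D[OF assms] by blast
  have "\<bar>y ^ k * u y\<bar> \<le> (B0 + B2) * \<bar>inverse (1 + y\<^sup>2)\<bar>" for y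
  proof -
    have p: "0 < 1 + y\<^sup>2" using zero_le_power2[of y] by linarith
    have "\<bar>y ^ (k + 2) * u y\<bar> = y\<^sup>2 * \<bar>y ^ k * u y\<bar>"
      by (simp add: power_add abs_mult power2_eq_square)
    then have "(1 + y\<^sup>2) * \<bar>y ^ k * u y\<bar> = \<bar>y ^ k * u y\<bar> + \<bar>y ^ (k + 2) * u y\<bar>"
      by (simp add: distrib_right)
    also have "\<dots> \<le> B0 + B2" using B0 B2 by (meson add_mono)
    finally have "(1 + y\<^sup>2) * \<bar>y ^ k * u y\<bar> \<le> B0 + B2" .
    then show ?thesis using p by (simp add: field_simps)
  qed
  then show ?thesis by blast
qed

lemma Sw_integrable:
  assumes "Sw (Suc 0) u"
  shows "integrable lborel (\<lambda>y. y ^ k * u y)"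
proof -
  obtain C where C: "\<forall>y. \<bar>y ^ k * u y\<bar> \<le> C * \<bar>inverse (1 + y\<^sup>2)\<bar>"
    using Sw0_decay[OF Sw_SucD(2)[OF assms]] by blast
  have "continuous_on UNIV u" using assms by (rule Sw1_cont)
  then have "continuous_on UNIV (\<lambda>y. y ^ k * u y)" by (intro continuous_intros)
  then show ?thesis by (rule integrable_cont_bound[OF integrable_inv_sq _ C[rule_format]])
qed

lemma Sw_integrable0:
  assumes "Sw (Suc 0) u"
  shows "integrable lborel u"
  using Sw_integrable[OF assms, of 0] by simp

lemma Sw_tendsto:
  assumes "Sw 0 u"
  shows "((\<lambda>y. y ^ k * u y) \<longlongrightarrow> 0) at_top" "((\<lambda>y. y ^ k * u y) \<longlongrightarrow> 0) at_bot"
proof -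
  obtain C where C: "\<forall>y. \<bar>y ^ k * u y\<bar> \<le> C * \<bar>inverse (1 + y\<^sup>2)\<bar>"
    using Sw0_decay[OF assms] by blast
  have ev: "eventually (\<lambda>y. norm (y ^ k * u y) \<le> C * \<bar>inverse (1 + y\<^sup>2)\<bar>) F" for F
    by (rule always_eventually, rule allI) (use C in \<open>simp only: real_norm_def\<close>)
  have l1: "((\<lambda>y::real. inverse (1 + y\<^sup>2)) \<longlongrightarrow> 0) at_top" by real_asymp
  have l2: "((\<lambda>y::real. inverse (1 + y\<^sup>2)) \<longlongrightarrow> 0) at_bot" by real_asymp
  have l1': "((\<lambda>y::real. C * \<bar>inverse (1 + y\<^sup>2)\<bar>) \<longlongrightarrow> 0) at_top"
    using tendsto_mult[OF tendsto_const[of C] tendsto_rabs[OF l1]] by simp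
  have l2': "((\<lambda>y::real. C * \<bar>inverse (1 + y\<^sup>2)\<bar>) \<longlongrightarrow> 0) at_bot"
    using tendsto_mult[OF tendsto_const[of C] tendsto_rabs[OF l2]] by simp
  show "((\<lambda>y. y ^ k * u y) \<longlongrightarrow> 0) at_top" by (rule Lim_null_comparison[OF ev l1'])
  show "((\<lambda>y. y ^ k * u y) \<longlongrightarrow> 0) at_bot" by (rule Lim_null_comparison[OF ev l2'])
qed

lemma ftc_R:
  fixes w w' :: "real \<Rightarrow> real"
  assumes "\<And>x. DERIV w x :> w' x" "continuous_on UNIV w'" "integrable lborel w'"
    "(w \<longlongrightarrow> 0) at_top" "(w \<longlongrightarrow> 0) at_bot"
  shows "integral\<^sup>L lborel w' = 0"
proof -
  have "(LBINT x=-\<infinity>..\<infinity>. w' x) = 0 - 0"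
  proof (rule interval_integral_FTC_integrable[where F = w])
    show "(- \<infinity>::ereal) < \<infinity>" by simp
    show "\<And>x. - \<infinity> < ereal x \<Longrightarrow> ereal x < \<infinity> \<Longrightarrow> (w has_vector_derivative w' x) (at x)"
      using assms(1) has_real_derivative_iff_has_vector_derivative by blast
    show "\<And>x. - \<infinity> < ereal x \<Longrightarrow> ereal x < \<infinity> \<Longrightarrow> isCont w' x"
      using assms(2) by (simp add: continuous_on_eq_continuous_at)
    show "set_integrable lborel (einterval (- \<infinity>) \<infinity>) w'"
      using assms(3) by (simp add: set_integrable_def)
    show "((w \<circ> real_of_ereal) \<longlongrightarrow> 0) (at_right (- \<infinity>))"
      unfolding ereal_tendsto_simps by (rule assms(5))
    show "((w \<circ> real_of_ereal) \<longlongrightarrow> 0) (at_left \<infinity>)"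
      unfolding ereal_tendsto_simps by (rule assms(4))
  qed
  then show ?thesis by (simp add: interval_lebesgue_integral_def set_lebesgue_integral_def)
qed

lemma ibp_mom:
  assumes u: "Sw (Suc (Suc 0)) u"
  shows "integral\<^sup>L lborel (\<lambda>y. y ^ Suc k * deriv u y) = - real (Suc k) * integral\<^sup>L lborel (\<lambda>y. y ^ k * u y)"
proof -
  have u1: "Sw (Suc 0) u" using Sw_SucD(4)[OF u] .
  have du1: "Sw (Suc 0) (deriv u)" using Sw_SucD(3)[OF u] .
  have dif: "\<forall>x. u differentiable (at x)" using Sw_SucD(1)[OF u] .
  define w' where "w' y = real (Suc k) * (y ^ k * u y) + y ^ Suc k * deriv u y" for y
  have D: "DERIV (\<lambda>y. y ^ Suc k * u y) x :> w' x" for x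
  proof -
    have "DERIV (\<lambda>y. y ^ Suc k * u y) x :> real (Suc k) * x ^ (Suc k - 1) * u x + deriv u x * x ^ Suc k"
      using DERIV_mult[OF DERIV_pow[of "Suc k" x] D_of[OF dif]] by simp
    then show ?thesis unfolding w'_def by (simp add: algebra_simps)
  qed
  have i1: "integrable lborel (\<lambda>y. y ^ k * u y)" using Sw_integrable[OF u1] .
  have i2: "integrable lborel (\<lambda>y. y ^ Suc k * deriv u y)" using Sw_integrable[OF du1] .
  have iw: "integrable lborel w'" unfolding w'_def using i1 i2 by simp
  have cw: "continuous_on UNIV w'" unfolding w'_def
    using Sw1_cont[OF u1] Sw1_cont[OF du1] by (intro continuous_intros) auto
  have "integral\<^sup>L lborel w' = 0"
    by (rule ftc_R[OF D cw iw Sw_tendsto[OF Sw_SucD(2)[OF u1]]])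
  moreover have "integral\<^sup>L lborel w' = real (Suc k) * integral\<^sup>L lborel (\<lambda>y. y ^ k * u y) + integral\<^sup>L lborel (\<lambda>y. y ^ Suc k * deriv u y)"
    unfolding w'_def using i1 i2 by simp
  ultimately have "integral\<^sup>L lborel (\<lambda>y. y ^ Suc k * deriv u y) = - (real (Suc k) * integral\<^sup>L lborel (\<lambda>y. y ^ k * u y))"
    by linarith
  then show ?thesis by (simp only: mult_minus_left)
qed

lemma ibp_0:
  assumes u: "Sw (Suc (Suc 0)) u"
  shows "integral\<^sup>L lborel (deriv u) = 0"
proof -
  have u1: "Sw (Suc 0) u" using Sw_SucD(4)[OF u] .
  have du1: "Sw (Suc 0) (deriv u)" using Sw_SucD(3)[OF u] .
  have dif: "\<forall>x. u differentiable (at x)" using Sw_SucD(1)[OF u] .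
  show ?thesis
    using ftc_R[OF D_of[OF dif] Sw1_cont[OF du1] Sw_integrable0[OF du1]] Sw_tendsto[OF Sw_SucD(2)[OF u1], of 0]
    by simp
qed

lemma moments_vanish:
  assumes th: "\<forall>n. Sw n \<theta>"
  shows "k < j \<Longrightarrow> integral\<^sup>L lborel (\<lambda>y. y ^ k * (deriv ^^ j) \<theta> y) = 0"
proof (induction j arbitrary: k)
  case 0 then show ?case by simp
next
  case (Suc j)
  have u: "Sw (Suc (Suc 0)) ((deriv ^^ j) \<theta>)" using th Sw_deriv_funpow[of j "Suc (Suc 0)" \<theta>] by simp
  have e: "(deriv ^^ Suc j) \<theta> = deriv ((deriv ^^ j) \<theta>)" by simp
  show ?case
  proof (cases k)
    case 0 then show ?thesis unfolding e using ibp_0[OF u] by simp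
  next
    case (Suc k')
    then have "k' < j" using Suc.prems by simp
    then show ?thesis unfolding e Suc using ibp_mom[OF u, of k'] Suc.IH[of k'] by simp
  qed
qed

lemma integral_pos:
  fixes g :: "real \<Rightarrow> real"
  assumes c: "continuous_on UNIV g" and nn: "\<And>x. 0 \<le> g x" and p: "0 < g y0" and i: "integrable lborel g"
  shows "0 < integral\<^sup>L lborel g"
proof -
  have cc: "\<forall>e>0. \<exists>d>0. \<forall>y. dist y y0 < d \<longrightarrow> dist (g y) (g y0) < e"
    using c unfolding continuous_on_iff by blast
  have "g y0 / 2 > 0" using p by simp
  then obtain d where d: "d > 0" "\<And>y. dist y y0 < d \<Longrightarrow> dist (g y) (g y0) < g y0 / 2"
    using cc by blast
  define A where "A = {y0 - d/2 .. y0 + d/2}"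
  have le: "indicator A x * (g y0 / 2) \<le> g x" for x
  proof (cases "x \<in> A")
    case True
    then have "dist x y0 < d" using d(1) by (auto simp: A_def dist_real_def)
    then have "\<bar>g x - g y0\<bar> < g y0 / 2" using d(2) by (simp add: dist_real_def)
    then have "g y0 / 2 \<le> g x" by linarith
    then show ?thesis using True by simp
  next
    case False then show ?thesis using nn by simp
  qed
  have iA: "integrable lborel (\<lambda>x. indicator A x * (g y0 / 2))"
    unfolding A_def using d(1) by (intro integrable_mult_left integrable_real_indicator) auto
  have "integral\<^sup>L lborel (\<lambda>x. indicator A x * (g y0 / 2)) \<le> integral\<^sup>L lborel g"
    by (rule integral_mono[OF iA i le])
  moreover have "integral\<^sup>L lborel (\<lambda>x. indicator A x * (g y0 / 2)) = d * (g y0 / 2)"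
    unfolding A_def using d(1) by simp
  moreover have "0 < d * (g y0 / 2)" using d(1) p by simp
  ultimately show ?thesis by linarith
qed


lemma psi_D: assumes "schwartz \<psi>" shows "DERIV ((deriv ^^ m) \<psi>) x :> (deriv ^^ (Suc m)) \<psi> x"
proof -
  have "(deriv ^^ m) \<psi> differentiable (at x)" using assms unfolding schwartz_def by blast
  then obtain D where D: "DERIV ((deriv ^^ m) \<psi>) x :> D" using real_differentiable_def by blast
  then have "deriv ((deriv ^^ m) \<psi>) x = D" by (rule DERIV_imp_deriv)
  then show ?thesis using D by simp
qed

lemma psi_B: assumes "schwartz \<psi>" shows "\<exists>B. \<forall>x. \<bar>(deriv ^^ m) \<psi> x\<bar> \<le> B"
proof -
  have "bounded (range (\<lambda>x. x ^ 0 * (deriv ^^ m) \<psi> x))" using assms unfolding schwartz_def by blast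
  then show ?thesis unfolding bounded_iff by simp
qed

lemma psi_cont: assumes "schwartz \<psi>" shows "continuous_on UNIV \<psi>"
proof -
  have "\<forall>x. \<psi> differentiable (at x)" using assms unfolding schwartz_def
    by (metis funpow_0)
  then show ?thesis
    by (intro continuous_at_imp_continuous_on ballI differentiable_imp_continuous_within) blast
qed

lemma sum_zero_pow: "M \<noteq> 0 \<Longrightarrow> (\<Sum>j<M. a j * (0::real) ^ j) = a 0"
proof -
  assume "M \<noteq> 0"
  then obtain M' where M: "M = Suc M'" using not0_implies_Suc by blast
  show ?thesis unfolding M by (simp add: sum.lessThan_Suc_shift del: sum.lessThan_Suc)
qed

lemma taylor_bound:
  assumes \<psi>: "schwartz \<psi>" and B: "\<forall>x. \<bar>(deriv ^^ M) \<psi> x\<bar> \<le> B"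
  shows "\<bar>\<psi> (x0 + z) - (\<Sum>j<M. (deriv ^^ j) \<psi> x0 / fact j * z ^ j)\<bar> \<le> B / fact M * \<bar>z\<bar> ^ M"
proof (cases "M = 0")
  case True then show ?thesis using B by simp
next
  case M0: False
  show ?thesis
  proof (cases "z = 0")
    case True
    have "(\<Sum>j<M. (deriv ^^ j) \<psi> x0 / fact j * z ^ j) = \<psi> x0"
      unfolding True using sum_zero_pow[OF M0, of "\<lambda>j. (deriv ^^ j) \<psi> x0 / fact j"] by simp
    moreover have "0 \<le> B" using B by (meson abs_ge_zero order_trans)
    ultimately show ?thesis using True M0 by simp
  next
    case False
    have "\<exists>t. (if x0 + z < x0 then x0 + z < t \<and> t < x0 else x0 < t \<and> t < x0 + z) \<and>
      \<psi> (x0 + z) = (\<Sum>m<M. ((deriv ^^ m) \<psi> x0 / fact m) * (x0 + z - x0) ^ m) + ((deriv ^^ M) \<psi> t / fact M) * (x0 + z - x0) ^ M"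
      by (rule Taylor[where diff = "\<lambda>m. (deriv ^^ m) \<psi>" and a = "min x0 (x0 + z)" and b = "max x0 (x0 + z)"])
         (use M0 False psi_D[OF \<psi>] in auto)
    then obtain t where t: "\<psi> (x0 + z) = (\<Sum>m<M. ((deriv ^^ m) \<psi> x0 / fact m) * z ^ m) + ((deriv ^^ M) \<psi> t / fact M) * z ^ M"
      by auto
    have "\<bar>(deriv ^^ M) \<psi> t / fact M * z ^ M\<bar> = \<bar>(deriv ^^ M) \<psi> t\<bar> / fact M * \<bar>z\<bar> ^ M"
      by (simp add: abs_mult power_abs)
    also have "\<dots> \<le> B / fact M * \<bar>z\<bar> ^ M"
      by (intro mult_right_mono divide_right_mono) (use B in auto)
    finally show ?thesis using t by simp
  qed
qed

lemma G_expand: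
  fixes h :: "real \<Rightarrow> real"
  assumes h: "Sw (Suc 0) h" and \<psi>: "schwartz \<psi>"
  shows "\<exists>K. \<forall>\<epsilon>. \<bar>integral\<^sup>L lborel (\<lambda>y. h y * \<psi> (x0 + \<epsilon> * y)) -
      (\<Sum>j<M. (deriv ^^ j) \<psi> x0 / fact j * integral\<^sup>L lborel (\<lambda>y. y ^ j * h y) * \<epsilon> ^ j)\<bar> \<le> K * \<bar>\<epsilon>\<bar> ^ M"
proof -
  obtain B where B: "\<forall>x. \<bar>(deriv ^^ M) \<psi> x\<bar> \<le> B" using psi_B[OF \<psi>] by blast
  obtain B0 where B0: "\<forall>x. \<bar>(deriv ^^ 0) \<psi> x\<bar> \<le> B0" using psi_B[OF \<psi>] by blast
  then have B0': "\<forall>x. \<bar>\<psi> x\<bar> \<le> B0" by simp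
  define a where "a j = (deriv ^^ j) \<psi> x0 / fact j" for j
  define K where "K = B / fact M * integral\<^sup>L lborel (\<lambda>y. \<bar>y ^ M * h y\<bar>)"
  have ij: "integrable lborel (\<lambda>y. y ^ j * h y)" for j using Sw_integrable[OF h] .
  have ch: "continuous_on UNIV h" using Sw1_cont[OF h] .
  have c\<psi>: "continuous_on UNIV \<psi>" using psi_cont[OF \<psi>] .
  show ?thesis
  proof (intro exI allI)
    fix \<epsilon> :: real
    have c2: "continuous_on UNIV (\<lambda>y. \<psi> (x0 + \<epsilon> * y))"
      by (rule continuous_on_compose2[OF c\<psi>]) (auto intro!: continuous_intros)
    have c1: "continuous_on UNIV (\<lambda>y. h y * \<psi> (x0 + \<epsilon> * y))"
      by (intro continuous_intros ch c2)
    have bd1: "\<bar>h y * \<psi> (x0 + \<epsilon> * y)\<bar> \<le> B0 * \<bar>h y\<bar>" for y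
    proof -
      have "\<bar>h y * \<psi> (x0 + \<epsilon> * y)\<bar> = \<bar>h y\<bar> * \<bar>\<psi> (x0 + \<epsilon> * y)\<bar>" by (simp add: abs_mult)
      also have "\<dots> \<le> \<bar>h y\<bar> * B0" by (rule mult_left_mono) (use B0' in auto)
      finally show ?thesis by (simp add: mult.commute)
    qed
    have i1: "integrable lborel (\<lambda>y. h y * \<psi> (x0 + \<epsilon> * y))"
      by (rule integrable_cont_bound[OF Sw_integrable0[OF h] c1 bd1])
    have eqpoly: "(\<lambda>y. h y * (\<Sum>j<M. a j * (\<epsilon> * y) ^ j)) = (\<lambda>y. \<Sum>j<M. (a j * \<epsilon> ^ j) * (y ^ j * h y))"
      by (rule ext) (simp add: sum_distrib_left power_mult_distrib algebra_simps)
    have ipoly: "integrable lborel (\<lambda>y. h y * (\<Sum>j<M. a j * (\<epsilon> * y) ^ j))"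
      unfolding eqpoly by (rule Bochner_Integration.integrable_sum) (simp add: ij)
    have "integral\<^sup>L lborel (\<lambda>y. h y * (\<Sum>j<M. a j * (\<epsilon> * y) ^ j))
        = (\<Sum>j<M. integral\<^sup>L lborel (\<lambda>y. (a j * \<epsilon> ^ j) * (y ^ j * h y)))"
      unfolding eqpoly by (rule Bochner_Integration.integral_sum) (use ij in simp)
    also have "\<dots> = (\<Sum>j<M. a j * integral\<^sup>L lborel (\<lambda>y. y ^ j * h y) * \<epsilon> ^ j)"
      by (rule sum.cong) (simp_all add: ij)
    finally have intpoly: "integral\<^sup>L lborel (\<lambda>y. h y * (\<Sum>j<M. a j * (\<epsilon> * y) ^ j))
        = (\<Sum>j<M. a j * integral\<^sup>L lborel (\<lambda>y. y ^ j * h y) * \<epsilon> ^ j)" .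
    define R where "R y = \<psi> (x0 + \<epsilon> * y) - (\<Sum>j<M. a j * (\<epsilon> * y) ^ j)" for y
    have hR: "(\<lambda>y. h y * R y) = (\<lambda>y. h y * \<psi> (x0 + \<epsilon> * y) - h y * (\<Sum>j<M. a j * (\<epsilon> * y) ^ j))"
      by (rule ext) (simp add: R_def algebra_simps)
    have iR: "integrable lborel (\<lambda>y. h y * R y)" unfolding hR using i1 ipoly by simp
    have eqR: "integral\<^sup>L lborel (\<lambda>y. h y * \<psi> (x0 + \<epsilon> * y)) - (\<Sum>j<M. a j * integral\<^sup>L lborel (\<lambda>y. y ^ j * h y) * \<epsilon> ^ j)
        = integral\<^sup>L lborel (\<lambda>y. h y * R y)"
      unfolding hR intpoly[symmetric] using i1 ipoly by simp
    define g where "g y = (B / fact M * \<bar>\<epsilon>\<bar> ^ M) * \<bar>y ^ M * h y\<bar>" for y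
    have ig: "integrable lborel g" unfolding g_def using ij[of M] by simp
    have bR: "\<bar>h y * R y\<bar> \<le> g y" for y
    proof -
      have "\<bar>R y\<bar> \<le> B / fact M * \<bar>\<epsilon> * y\<bar> ^ M"
        unfolding R_def a_def using taylor_bound[OF \<psi> B, of x0 "\<epsilon> * y"] by simp
      then have "\<bar>h y\<bar> * \<bar>R y\<bar> \<le> \<bar>h y\<bar> * (B / fact M * \<bar>\<epsilon> * y\<bar> ^ M)"
        by (rule mult_left_mono) simp
      then show ?thesis unfolding g_def by (simp add: abs_mult power_mult_distrib power_abs algebra_simps)
    qed
    have m1: "integral\<^sup>L lborel (\<lambda>y. h y * R y) \<le> integral\<^sup>L lborel g"
      by (rule integral_mono[OF iR ig]) (use bR in \<open>auto simp: abs_le_iff\<close>)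
    have m2: "integral\<^sup>L lborel (\<lambda>y. - (h y * R y)) \<le> integral\<^sup>L lborel g"
      by (rule integral_mono[OF _ ig]) (use bR iR in \<open>auto simp: abs_le_iff\<close>)
    have "integral\<^sup>L lborel g = K * \<bar>\<epsilon>\<bar> ^ M" unfolding g_def K_def by simp
    then have "\<bar>integral\<^sup>L lborel (\<lambda>y. h y * R y)\<bar> \<le> K * \<bar>\<epsilon>\<bar> ^ M" using m1 m2 by simp
    then show "\<bar>integral\<^sup>L lborel (\<lambda>y. h y * \<psi> (x0 + \<epsilon> * y)) -
      (\<Sum>j<M. (deriv ^^ j) \<psi> x0 / fact j * integral\<^sup>L lborel (\<lambda>y. y ^ j * h y) * \<epsilon> ^ j)\<bar> \<le> K * \<bar>\<epsilon>\<bar> ^ M"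
      using eqR unfolding a_def by simp
  qed
qed

lemma R_eps_from_expansion:
  fixes F :: "real \<Rightarrow> real" and c :: "nat \<Rightarrow> real"
  assumes ex: "\<And>M. \<exists>K. \<forall>\<epsilon>. 0 < \<epsilon> \<longrightarrow> \<bar>F \<epsilon> - (\<Sum>j<M. c j * \<epsilon> ^ j)\<bar> \<le> K * \<epsilon> ^ M"
    and van: "\<And>j. int j < p \<Longrightarrow> c j = 0"
  shows "R_eps_up_to p F"
  unfolding R_eps_up_to_def
proof (intro exI allI)
  define \<xi> where "\<xi> k = (if 0 \<le> k then c (nat k) else 0)" for k :: int
  fix N :: int
  have ev: "eventually (\<lambda>\<epsilon>::real. 0 < \<epsilon> \<and> \<epsilon> < 1) (at_right 0)"
    unfolding eventually_at_right_field by (intro exI[of _ 1]) auto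
  show "(\<lambda>\<epsilon>. F \<epsilon> - (\<Sum>k\<in>{p..N}. \<xi> k * \<epsilon> powi k)) \<in> O[at_right 0](\<lambda>\<epsilon>. \<epsilon> powi (N + 1))"
  proof (cases "0 \<le> N + 1")
    case True
    define M where "M = nat (N + 1)"
    obtain K where K: "\<forall>\<epsilon>. 0 < \<epsilon> \<longrightarrow> \<bar>F \<epsilon> - (\<Sum>j<M. c j * \<epsilon> ^ j)\<bar> \<le> K * \<epsilon> ^ M"
      using ex by blast
    have sums: "(\<Sum>k\<in>{p..N}. \<xi> k * \<epsilon> powi k) = (\<Sum>j<M. c j * \<epsilon> ^ j)" for \<epsilon> :: real
    proof -
      have z: "\<forall>k\<in>{min p 0..N} - {p..N}. \<xi> k * \<epsilon> powi k = 0"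
      proof
        fix k assume "k \<in> {min p 0..N} - {p..N}"
        then have "k < p" by auto
        then show "\<xi> k * \<epsilon> powi k = 0" unfolding \<xi>_def using van[of "nat k"] by auto
      qed
      have z2: "\<forall>k\<in>{min p 0..N} - {0..N}. \<xi> k * \<epsilon> powi k = 0"
        unfolding \<xi>_def by auto
      have "(\<Sum>k\<in>{p..N}. \<xi> k * \<epsilon> powi k) = (\<Sum>k\<in>{min p 0..N}. \<xi> k * \<epsilon> powi k)"
        by (rule sum.mono_neutral_left[OF _ _ z]) auto
      also have "\<dots> = (\<Sum>k\<in>{0..N}. \<xi> k * \<epsilon> powi k)"
        by (rule sum.mono_neutral_left[OF _ _ z2, symmetric]) auto
      also have "{0..N} = int ` {..<M}"
      proof (rule set_eqI)
        fix k
        show "k \<in> {0..N} \<longleftrightarrow> k \<in> int ` {..<M}"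
        proof
          assume "k \<in> {0..N}" then show "k \<in> int ` {..<M}"
            unfolding M_def by (intro image_eqI[of _ _ "nat k"]) auto
        next
          assume "k \<in> int ` {..<M}" then show "k \<in> {0..N}" unfolding M_def by auto
        qed
      qed
      also have "(\<Sum>k\<in>int ` {..<M}. \<xi> k * \<epsilon> powi k) = (\<Sum>j<M. c j * \<epsilon> ^ j)"
        by (subst sum.reindex) (auto simp: \<xi>_def inj_on_def)
      finally show ?thesis .
    qed
    have pw: "\<epsilon> powi (N + 1) = \<epsilon> ^ M" for \<epsilon> :: real
      unfolding M_def using True by (metis nat_0_le power_int_of_nat)
    show ?thesis
    proof (rule bigoI[where c = K])
      show "\<forall>\<^sub>F \<epsilon> in at_right 0. norm (F \<epsilon> - (\<Sum>k\<in>{p..N}. \<xi> k * \<epsilon> powi k)) \<le> K * norm (\<epsilon> powi (N + 1))"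
        using ev
      proof eventually_elim
        case (elim \<epsilon>)
        then show ?case using K sums pw by (simp add: abs_of_pos)
      qed
    qed
  next
    case False
    obtain K where K: "\<forall>\<epsilon>. 0 < \<epsilon> \<longrightarrow> \<bar>F \<epsilon> - (\<Sum>j<0. c j * \<epsilon> ^ j)\<bar> \<le> K * \<epsilon> ^ 0"
      using ex by blast
    have sums: "(\<Sum>k\<in>{p..N}. \<xi> k * \<epsilon> powi k) = 0" for \<epsilon> :: real
      using False by (intro sum.neutral) (auto simp: \<xi>_def)
    have pw: "1 \<le> \<epsilon> powi (N + 1)" if "0 < \<epsilon>" "\<epsilon> < 1" for \<epsilon> :: real
    proof -
      have "\<epsilon> powi (N + 1) = inverse \<epsilon> ^ nat (- (N + 1))" using False by (simp add: power_int_def)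
      moreover have "1 \<le> inverse \<epsilon>" using that by (simp add: one_le_inverse)
      ultimately show ?thesis by (simp add: one_le_power)
    qed
    show ?thesis
    proof (rule bigoI[where c = "\<bar>K\<bar>"])
      show "\<forall>\<^sub>F \<epsilon> in at_right 0. norm (F \<epsilon> - (\<Sum>k\<in>{p..N}. \<xi> k * \<epsilon> powi k)) \<le> \<bar>K\<bar> * norm (\<epsilon> powi (N + 1))"
        using ev
      proof eventually_elim
        case (elim \<epsilon>)
        then have "\<bar>F \<epsilon>\<bar> \<le> K" using K by simp
        moreover have "\<bar>K\<bar> * 1 \<le> \<bar>K\<bar> * \<bar>\<epsilon> powi (N + 1)\<bar>"
          using pw[of \<epsilon>] elim by (intro mult_left_mono) auto
        ultimately show ?case using sums by simp
      qed
    qed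
  qed
qed


definition gs :: "real \<Rightarrow> real" where "gs x = exp (- (x ^ 2))"

lemma Sw_gs: "Sw n gs" unfolding gs_def[abs_def] by (rule Sw_gauss)

lemma const_zero: assumes "\<forall>x. \<bar>x * c\<bar> \<le> B" shows "c = (0::real)"
proof (rule ccontr)
  assume c: "c \<noteq> 0"
  have "\<bar>((\<bar>B\<bar> + 1) / c) * c\<bar> \<le> B" using assms by blast
  then show False using c by simp
qed

lemma not_all_zero:
  assumes "Sw (Suc k) u" "\<forall>x. (deriv ^^ k) u x = 0" shows "u x = 0"
  using assms
proof (induction k arbitrary: u x)
  case 0 then show ?case by simp
next
  case (Suc k)
  have du: "Sw (Suc k) (deriv u)" using Sw_SucD(3)[OF Suc.prems(1)] .
  have "\<forall>x. (deriv ^^ k) (deriv u) x = 0" using Suc.prems(2) by (simp add: funpow_Suc_right del: funpow.simps)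
  then have d0: "\<And>y. deriv u y = 0" using Suc.IH[OF du] by blast
  have dif: "\<forall>x. u differentiable (at x)" using Sw_SucD(1)[OF Suc.prems(1)] .
  have "\<forall>y. DERIV u y :> 0" using D_of[OF dif] d0 by metis
  then have cst: "\<And>y. u y = u 0" by (metis DERIV_isconst_all)
  obtain B where "\<forall>y. \<bar>y ^ 1 * u y\<bar> \<le> B" using Sw_0D[OF Sw_SucD(2)[OF Suc.prems(1)]] by blast
  then have b1: "\<forall>y. \<bar>y * u y\<bar> \<le> B" by simp
  have "\<forall>y. \<bar>y * u 0\<bar> \<le> B" using b1 cst by metis
  then have "u 0 = 0" by (rule const_zero)
  then show ?case using cst by simp
qed

lemma deriv_s:
  fixes \<phi> :: "real \<Rightarrow> real"
  assumes "\<forall>x. \<phi> differentiable (at x)" "\<epsilon> \<noteq> 0"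
  shows "deriv (\<lambda>s. soliton_v l0 dl c \<phi> s x \<epsilon>) t = dl * (deriv \<phi> ((x - c * t) / \<epsilon>) * (- c / \<epsilon>))"
proof -
  have g: "DERIV (\<lambda>s. (x - c * s) / \<epsilon>) t :> - c / \<epsilon>"
    using assms(2) by (auto intro!: derivative_eq_intros simp: field_simps)
  have "DERIV (\<lambda>s. l0 + dl * \<phi> ((x - c * s) / \<epsilon>)) t :> 0 + dl * (deriv \<phi> ((x - c * t) / \<epsilon>) * (- c / \<epsilon>))"
    by (intro DERIV_add DERIV_const DERIV_cmult DERIV_chain2[OF D_of[OF assms(1)] g])
  then show ?thesis unfolding soliton_v_def by (intro DERIV_imp_deriv) simp
qed

lemma deriv_y:
  fixes \<phi> :: "real \<Rightarrow> real"
  assumes "\<forall>x. \<phi> differentiable (at x)" "\<epsilon> \<noteq> 0"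
  shows "deriv (\<lambda>y. soliton_v l0 dl c \<phi> t y \<epsilon>) x = dl * (deriv \<phi> ((x - c * t) / \<epsilon>) * (1 / \<epsilon>))"
proof -
  have g: "DERIV (\<lambda>y. (y - c * t) / \<epsilon>) x :> 1 / \<epsilon>"
    using assms(2) by (auto intro!: derivative_eq_intros simp: field_simps)
  have "DERIV (\<lambda>y. l0 + dl * \<phi> ((y - c * t) / \<epsilon>)) x :> 0 + dl * (deriv \<phi> ((x - c * t) / \<epsilon>) * (1 / \<epsilon>))"
    by (intro DERIV_add DERIV_const DERIV_cmult DERIV_chain2[OF D_of[OF assms(1)] g])
  then show ?thesis unfolding soliton_v_def by (intro DERIV_imp_deriv) simp
qed

lemma int_hpsi:
  fixes h :: "real \<Rightarrow> real"
  assumes h: "Sw (Suc 0) h" and \<psi>: "schwartz \<psi>"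
  shows "integrable lborel (\<lambda>y. h y * \<psi> (x0 + \<epsilon> * y))"
proof -
  obtain B0 where B0: "\<forall>x. \<bar>(deriv ^^ 0) \<psi> x\<bar> \<le> B0" using psi_B[OF \<psi>] by blast
  then have B0': "\<forall>x. \<bar>\<psi> x\<bar> \<le> B0" by simp
  have ch: "continuous_on UNIV h" using Sw1_cont[OF h] .
  have c\<psi>: "continuous_on UNIV \<psi>" using psi_cont[OF \<psi>] .
  have c2: "continuous_on UNIV (\<lambda>y. \<psi> (x0 + \<epsilon> * y))"
    by (rule continuous_on_compose2[OF c\<psi>]) (auto intro!: continuous_intros)
  have c1: "continuous_on UNIV (\<lambda>y. h y * \<psi> (x0 + \<epsilon> * y))"
    by (intro continuous_intros ch c2)
  have bd1: "\<bar>h y * \<psi> (x0 + \<epsilon> * y)\<bar> \<le> B0 * \<bar>h y\<bar>" for y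
  proof -
    have "\<bar>h y * \<psi> (x0 + \<epsilon> * y)\<bar> = \<bar>h y\<bar> * \<bar>\<psi> (x0 + \<epsilon> * y)\<bar>" by (simp add: abs_mult)
    also have "\<dots> \<le> \<bar>h y\<bar> * B0" by (rule mult_left_mono) (use B0' in auto)
    finally show ?thesis by (simp add: mult.commute)
  qed
  show ?thesis by (rule integrable_cont_bound[OF Sw_integrable0[OF h] c1 bd1])
qed

lemma change_var:
  fixes h :: "real \<Rightarrow> real"
  assumes h: "Sw (Suc 0) h" and \<psi>: "schwartz \<psi>" and e: "0 < \<epsilon>"
  shows "integral UNIV (\<lambda>x. (1 / \<epsilon>) * h ((x - x0) / \<epsilon>) * \<psi> x) = integral\<^sup>L lborel (\<lambda>y. h y * \<psi> (x0 + \<epsilon> * y))"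
proof -
  define f where "f x = (1 / \<epsilon>) * h ((x - x0) / \<epsilon>) * \<psi> x" for x
  have fe: "f (x0 + \<epsilon> * y) = (1 / \<epsilon>) * (h y * \<psi> (x0 + \<epsilon> * y))" for y
    unfolding f_def using e by simp
  have i: "integrable lborel (\<lambda>y. f (x0 + \<epsilon> * y))"
    unfolding fe using int_hpsi[OF h \<psi>] by simp
  have if': "integrable lborel f"
    using i lborel_integrable_real_affine_iff[of \<epsilon> f x0] e by simp
  have "integral UNIV f = integral\<^sup>L lborel f" by (rule integral_lborel[OF if'])
  also have "\<dots> = \<bar>\<epsilon>\<bar> *\<^sub>R integral\<^sup>L lborel (\<lambda>y. f (x0 + \<epsilon> * y))"
    using e by (intro lborel_integral_real_affine) simp
  also have "\<dots> = integral\<^sup>L lborel (\<lambda>y. h y * \<psi> (x0 + \<epsilon> * y))"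
    unfolding fe using e by simp
  finally show ?thesis unfolding f_def .
qed


theorem theorem2:
  fixes T :: real and p :: int
  assumes "T > 0"
  shows "\<exists>l0 dl c \<phi>. dl \<noteq> 0 \<and> schwartz \<phi> \<and> (\<phi> has_integral 1) UNIV \<and>
     (\<forall>t \<in> {0..T}. \<forall>\<psi>. schwartz \<psi> \<longrightarrow>
        R_eps_up_to p (\<lambda>\<epsilon>. integral UNIV (\<lambda>x.
           (deriv (\<lambda>s. soliton_v l0 dl c \<phi> s x \<epsilon>) t
            + soliton_v l0 dl c \<phi> t x \<epsilon> * deriv (\<lambda>y. soliton_v l0 dl c \<phi> t y \<epsilon>) x)
           * \<psi> x))) \<and>
     (c - l0) / dl = 1/2 * integral UNIV (\<lambda>x. (\<phi> x)\<^sup>2)"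
proof -
  define L where "L = nat p + 1"
  define \<Theta> where "\<Theta> = (deriv ^^ L) gs"
  have S\<Theta>: "Sw n \<Theta>" for n
    using Sw_deriv_funpow[of L n gs] Sw_gs unfolding \<Theta>_def by blast
  obtain B where B: "\<forall>x. \<bar>x ^ 0 * \<Theta> x\<bar> \<le> B" using Sw_0D[OF Sw_0[OF S\<Theta>[of 0]]] by blast
  then have B': "\<forall>x. \<bar>\<Theta> x\<bar> \<le> B" by simp
  define \<delta> where "\<delta> = 1 / (8 * (\<bar>B\<bar> + 1))"
  have \<delta>pos: "0 < \<delta>" unfolding \<delta>_def by (simp add: add_pos_nonneg)
  define H where "H x = \<delta> * \<Theta> x" for x
  have SH: "Sw n H" for n unfolding H_def[abs_def] by (rule Sw_cmult[OF S\<Theta>])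
  have Hb: "\<forall>x. \<bar>H x\<bar> \<le> 1/8"
  proof
    fix x
    have "\<bar>H x\<bar> = \<delta> * \<bar>\<Theta> x\<bar>" unfolding H_def using \<delta>pos by (simp add: abs_mult)
    also have "\<dots> \<le> \<delta> * (\<bar>B\<bar> + 1)" using B'[rule_format, of x] \<delta>pos by (intro mult_left_mono) auto
    also have "\<dots> = 1/8" unfolding \<delta>_def by (simp add: field_simps add_pos_nonneg)
    finally show "\<bar>H x\<bar> \<le> 1/8" .
  qed
  have pos: "0 < 1 + 4 * H x" for x using Hb[rule_format, of x] by linarith
  define \<phi>0 where "\<phi>0 x = (1 - sqrt (1 + 4 * H x)) / 2" for x
  have quad: "(\<phi>0 x)\<^sup>2 - \<phi>0 x = H x" for x
  proof -
    have "(sqrt (1 + 4 * H x))\<^sup>2 = 1 + 4 * H x" using pos[of x] by simp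
    then show ?thesis unfolding \<phi>0_def by (simp add: power2_eq_square field_simps)
  qed
  have dH: "\<forall>x. H differentiable (at x)" using Sw_SucD(1)[OF SH[of "Suc 0"]] .
  have D\<phi>0: "DERIV \<phi>0 x :> deriv H x * ((-1) * (1 + 4 * H x) powr (-1/2))" for x
  proof -
    have e: "\<phi>0 = (\<lambda>x. (1 - (1 + 4 * H x) powr (1/2)) / 2)"
      unfolding \<phi>0_def[abs_def] using pos by (simp add: powr_half_sqrt less_imp_le)
    have "DERIV (\<lambda>x. 1 + 4 * H x) x :> 0 + 4 * deriv H x"
      by (intro DERIV_add DERIV_const DERIV_cmult D_of dH)
    from DERIV_fun_powr[where r = "1/2", OF this pos]
    have "DERIV (\<lambda>x. (1 + 4 * H x) powr (1/2)) x :> 1/2 * (1 + 4 * H x) powr (1/2 - 1) * (0 + 4 * deriv H x)"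
      by simp
    then have "DERIV (\<lambda>x. (1 - (1 + 4 * H x) powr (1/2)) / 2) x :> (0 - 1/2 * (1 + 4 * H x) powr (1/2 - 1) * (0 + 4 * deriv H x)) / 2"
      by (intro DERIV_cdivide DERIV_diff DERIV_const)
    then show ?thesis unfolding e by (simp add: algebra_simps)
  qed
  have d\<phi>0: "deriv \<phi>0 = (\<lambda>x. deriv H x * ((-1) * (1 + 4 * H x) powr (-1/2)))"
    by (rule ext, rule DERIV_imp_deriv, rule D\<phi>0)
  have S\<phi>00: "Sw 0 \<phi>0"
  proof (rule Sw_0I)
    fix m
    obtain Bm where Bm: "\<forall>x. \<bar>x ^ m * H x\<bar> \<le> Bm" using Sw_0D[OF Sw_0[OF SH[of 0]]] by blast
    have "\<bar>x ^ m * \<phi>0 x\<bar> \<le> 2 * Bm" for x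
    proof -
      have "\<bar>\<phi>0 x\<bar> \<le> 2 * \<bar>H x\<bar>" unfolding \<phi>0_def by (rule f_bound) (use Hb[rule_format, of x] in auto)
      then have "\<bar>x ^ m\<bar> * \<bar>\<phi>0 x\<bar> \<le> \<bar>x ^ m\<bar> * (2 * \<bar>H x\<bar>)" by (rule mult_left_mono) simp
      then show ?thesis using Bm[rule_format, of x] by (simp add: abs_mult)
    qed
    then show "\<exists>B. \<forall>x. \<bar>x ^ m * \<phi>0 x\<bar> \<le> B" by blast
  qed
  have S\<phi>0: "Sw n \<phi>0" for n
  proof (cases n)
    case 0 then show ?thesis using S\<phi>00 by simp
  next
    case (Suc n')
    have "Sw n' (deriv \<phi>0)" unfolding d\<phi>0
      by (rule Sw_Bd_mult[OF Sw_SucD(3)[OF SH[of "Suc n'"]] Bd_comp[OF _ Hb]]) (use SH in blast)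
    moreover have "\<forall>x. \<phi>0 differentiable (at x)" using D\<phi>0 real_differentiable_def by blast
    ultimately show ?thesis unfolding Suc using S\<phi>00 by (intro Sw_SucI)
  qed
  have S\<phi>0sq: "Sw (Suc 0) (\<lambda>x. (\<phi>0 x)\<^sup>2)"
    using Sw_Bd_mult[OF S\<phi>0[of "Suc 0"] Sw_imp_Bd[OF S\<phi>0[of "Suc 0"]]] by (simp add: power2_eq_square)
  have I\<phi>0: "integrable lborel \<phi>0" by (rule Sw_integrable0[OF S\<phi>0[of "Suc 0"]])
  have I\<phi>0sq: "integrable lborel (\<lambda>x. (\<phi>0 x)\<^sup>2)" by (rule Sw_integrable0[OF S\<phi>0sq])
  have IH: "integrable lborel H" by (rule Sw_integrable0[OF SH[of "Suc 0"]])
  have L0: "0 < L" unfolding L_def by simp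
  have intH: "integral\<^sup>L lborel H = 0"
  proof -
    have "integral\<^sup>L lborel (\<lambda>y. y ^ 0 * (deriv ^^ L) gs y) = 0"
      by (rule moments_vanish[OF allI[OF Sw_gs[rule_format]] L0])
    then have "integral\<^sup>L lborel \<Theta> = 0" unfolding \<Theta>_def by simp
    then show ?thesis unfolding H_def by simp
  qed
  define m where "m = integral\<^sup>L lborel \<phi>0"
  have m_sq: "integral\<^sup>L lborel (\<lambda>x. (\<phi>0 x)\<^sup>2) = m"
  proof -
    have "integral\<^sup>L lborel (\<lambda>x. (\<phi>0 x)\<^sup>2 - \<phi>0 x) = integral\<^sup>L lborel H"
      using quad by simp
    then show ?thesis using I\<phi>0 I\<phi>0sq intH unfolding m_def by simp
  qed
  obtain y0 where y0: "\<Theta> y0 \<noteq> 0"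
  proof (rule ccontr)
    assume "\<not> thesis"
    then have "\<forall>x. (deriv ^^ L) gs x = 0" using that unfolding \<Theta>_def by blast
    then have "gs 0 = 0" using not_all_zero[of L gs] Sw_gs by blast
    then show False unfolding gs_def by simp
  qed
  have "\<phi>0 y0 \<noteq> 0"
  proof
    assume "\<phi>0 y0 = 0"
    then have "H y0 = 0" using quad[of y0] by simp
    then show False using y0 \<delta>pos unfolding H_def by simp
  qed
  then have "0 < (\<phi>0 y0)\<^sup>2" by simp
  then have mpos: "0 < m"
    using integral_pos[OF Sw1_cont[OF S\<phi>0sq] _ _ I\<phi>0sq] m_sq by simp
  define \<phi> where "\<phi> x = (1 / m) * \<phi>0 x" for x
  define c where "c = 1 / (2 * m)"
  have S\<phi>: "Sw n \<phi>" for n unfolding \<phi>_def[abs_def] by (rule Sw_cmult[OF S\<phi>0])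
  have d\<phi>: "\<forall>x. \<phi> differentiable (at x)" using Sw_SucD(1)[OF S\<phi>[of "Suc 0"]] .
  have I\<phi>: "integrable lborel \<phi>" unfolding \<phi>_def using I\<phi>0 by simp
  have int\<phi>: "integral\<^sup>L lborel \<phi> = 1" unfolding \<phi>_def using I\<phi>0 mpos by (simp add: m_def[symmetric])
  have sqe: "(\<lambda>x. (\<phi> x)\<^sup>2) = (\<lambda>x. (1 / m)\<^sup>2 * (\<phi>0 x)\<^sup>2)"
    unfolding \<phi>_def by (rule ext) (simp only: power_mult_distrib)
  have I\<phi>sq: "integrable lborel (\<lambda>x. (\<phi> x)\<^sup>2)" unfolding sqe
    by (intro integrable_mult_right) (rule I\<phi>0sq)
  have "integral\<^sup>L lborel (\<lambda>x. (\<phi> x)\<^sup>2) = (1 / m)\<^sup>2 * m"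
    unfolding sqe using I\<phi>0sq m_sq by simp
  then have int\<phi>sq: "integral\<^sup>L lborel (\<lambda>x. (\<phi> x)\<^sup>2) = 1 / m"
    using mpos by (simp add: power2_eq_square)
  define hh where "hh y = (\<delta> / (2 * m\<^sup>2)) * (deriv ^^ Suc L) gs y" for y
  have Shh: "Sw n hh" for n
    unfolding hh_def[abs_def] using Sw_cmult[OF Sw_deriv_funpow[of "Suc L" n gs]] Sw_gs by blast
  have hh_eq: "deriv \<phi> z * (\<phi> z - c) = hh z" for z
  proof -
    have dphi: "deriv \<phi> z = (1 / m) * deriv \<phi>0 z"
      unfolding \<phi>_def[abs_def] by (rule DERIV_imp_deriv, rule DERIV_cmult, rule D_of) (use D\<phi>0 real_differentiable_def in blast)
    have dHz: "deriv H z = \<delta> * (deriv ^^ Suc L) gs z"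
    proof -
      have dT: "\<forall>x. \<Theta> differentiable (at x)" using Sw_SucD(1)[OF S\<Theta>[of "Suc 0"]] .
      have "deriv H z = \<delta> * deriv \<Theta> z"
        unfolding H_def[abs_def] by (rule DERIV_imp_deriv, rule DERIV_cmult, rule D_of[OF dT])
      then show ?thesis unfolding \<Theta>_def by simp
    qed
    define P where "P = 1 + 4 * H z"
    have Pp: "0 < P" unfolding P_def by (rule pos)
    have sP: "sqrt P = P powr (1/2)" using Pp by (simp add: powr_half_sqrt)
    have PP: "P powr (-1/2) * P powr (1/2) = 1" using Pp by (simp add: powr_add[symmetric])
    have "\<phi> z - c = - sqrt P / (2 * m)"
      unfolding \<phi>_def c_def \<phi>0_def P_def using mpos by (simp add: field_simps)
    then have "deriv \<phi> z * (\<phi> z - c) = (1 / m) * (deriv H z * ((-1) * P powr (-1/2))) * (- (P powr (1/2)) / (2 * m))"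
      unfolding dphi d\<phi>0 P_def[symmetric] sP by simp
    also have "\<dots> = deriv H z * (P powr (-1/2) * P powr (1/2)) / (2 * m\<^sup>2)"
      using mpos by (simp add: field_simps power2_eq_square)
    also have "\<dots> = hh z" unfolding PP dHz hh_def by (simp add: field_simps)
    finally show ?thesis .
  qed
  have van: "integral\<^sup>L lborel (\<lambda>y. y ^ j * hh y) = 0" if "int j < p" for j
  proof -
    have "j < Suc L" using that unfolding L_def by linarith
    then have "integral\<^sup>L lborel (\<lambda>y. y ^ j * (deriv ^^ Suc L) gs y) = 0"
      by (rule moments_vanish[OF allI[OF Sw_gs[rule_format]]])
    then show ?thesis unfolding hh_def by (simp add: mult.left_commute)
  qed
  show ?thesis
  proof (rule exI[of _ 0], rule exI[of _ 1], rule exI[of _ c], rule exI[of _ \<phi>], intro conjI ballI allI impI)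
    show "(1::real) \<noteq> 0" by simp
    show "schwartz \<phi>" by (rule schwartz_of_Sw) (use S\<phi> in blast)
    show "(\<phi> has_integral 1) UNIV" using has_integral_integral_lborel[OF I\<phi>] int\<phi> by simp
    show "(c - 0) / 1 = 1 / 2 * integral UNIV (\<lambda>x. (\<phi> x)\<^sup>2)"
      using integral_lborel[OF I\<phi>sq] int\<phi>sq unfolding c_def by simp
  next
    fix t \<psi> assume t: "t \<in> {0..T}" and \<psi>: "schwartz \<psi>"
    define x0 where "x0 = c * t"
    define F where "F \<epsilon> = integral UNIV (\<lambda>x.
           (deriv (\<lambda>s. soliton_v 0 1 c \<phi> s x \<epsilon>) t
            + soliton_v 0 1 c \<phi> t x \<epsilon> * deriv (\<lambda>y. soliton_v 0 1 c \<phi> t y \<epsilon>) x) * \<psi> x)" for \<epsilon>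
    have Feq: "F \<epsilon> = integral\<^sup>L lborel (\<lambda>y. hh y * \<psi> (x0 + \<epsilon> * y))" if e: "0 < \<epsilon>" for \<epsilon>
    proof -
      have "(\<lambda>x. (deriv (\<lambda>s. soliton_v 0 1 c \<phi> s x \<epsilon>) t
            + soliton_v 0 1 c \<phi> t x \<epsilon> * deriv (\<lambda>y. soliton_v 0 1 c \<phi> t y \<epsilon>) x) * \<psi> x)
          = (\<lambda>x. (1 / \<epsilon>) * hh ((x - x0) / \<epsilon>) * \<psi> x)"
      proof (rule ext)
        fix x
        have e0: "\<epsilon> \<noteq> 0" using e by simp
        have "deriv (\<lambda>s. soliton_v 0 1 c \<phi> s x \<epsilon>) t
            + soliton_v 0 1 c \<phi> t x \<epsilon> * deriv (\<lambda>y. soliton_v 0 1 c \<phi> t y \<epsilon>) x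
            = (1 / \<epsilon>) * (deriv \<phi> ((x - x0) / \<epsilon>) * (\<phi> ((x - x0) / \<epsilon>) - c))"
          unfolding deriv_s[OF d\<phi> e0] deriv_y[OF d\<phi> e0] using e
          by (simp add: soliton_v_def x0_def field_simps)
        then show "(deriv (\<lambda>s. soliton_v 0 1 c \<phi> s x \<epsilon>) t
            + soliton_v 0 1 c \<phi> t x \<epsilon> * deriv (\<lambda>y. soliton_v 0 1 c \<phi> t y \<epsilon>) x) * \<psi> x
          = (1 / \<epsilon>) * hh ((x - x0) / \<epsilon>) * \<psi> x"
          using hh_eq by simp
      qed
      then show ?thesis unfolding F_def using change_var[OF Shh[of "Suc 0"] \<psi> e] by simp
    qed
    have "R_eps_up_to p F"
    proof (rule R_eps_from_expansion[where c = "\<lambda>j. (deriv ^^ j) \<psi> x0 / fact j * integral\<^sup>L lborel (\<lambda>y. y ^ j * hh y)"])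
      fix M
      obtain K where K: "\<forall>\<epsilon>. \<bar>integral\<^sup>L lborel (\<lambda>y. hh y * \<psi> (x0 + \<epsilon> * y)) -
          (\<Sum>j<M. (deriv ^^ j) \<psi> x0 / fact j * integral\<^sup>L lborel (\<lambda>y. y ^ j * hh y) * \<epsilon> ^ j)\<bar> \<le> K * \<bar>\<epsilon>\<bar> ^ M"
        using G_expand[OF Shh[of "Suc 0"] \<psi>] by blast
      show "\<exists>K. \<forall>\<epsilon>. 0 < \<epsilon> \<longrightarrow> \<bar>F \<epsilon> - (\<Sum>j<M. (deriv ^^ j) \<psi> x0 / fact j * integral\<^sup>L lborel (\<lambda>y. y ^ j * hh y) * \<epsilon> ^ j)\<bar> \<le> K * \<epsilon> ^ M"
      proof (intro exI[of _ K] allI impI)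
        fix \<epsilon> :: real assume e: "0 < \<epsilon>"
        have "\<bar>\<epsilon>\<bar> ^ M = \<epsilon> ^ M" using e by simp
        then show "\<bar>F \<epsilon> - (\<Sum>j<M. (deriv ^^ j) \<psi> x0 / fact j * integral\<^sup>L lborel (\<lambda>y. y ^ j * hh y) * \<epsilon> ^ j)\<bar> \<le> K * \<epsilon> ^ M"
          using K[rule_format, of \<epsilon>] Feq[OF e] by simp
      qed
    next
      fix j :: nat assume "int j < p"
      then show "(deriv ^^ j) \<psi> x0 / fact j * integral\<^sup>L lborel (\<lambda>y. y ^ j * hh y) = 0"
        using van by simp
    qed
    then show "R_eps_up_to p (\<lambda>\<epsilon>. integral UNIV (\<lambda>x.
           (deriv (\<lambda>s. soliton_v 0 1 c \<phi> s x \<epsilon>) t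
            + soliton_v 0 1 c \<phi> t x \<epsilon> * deriv (\<lambda>y. soliton_v 0 1 c \<phi> t y \<epsilon>) x) * \<psi> x))"
      unfolding F_def .
  qed
qed


end
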